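(* Let $a_2 = i$, $a_0 = \frac{1-i}{2}$, or $a_2=-i$, $a_0=\frac{1+i}{2}$. Then the second-order recursion $$z_n = \frac{a_2 z_{n-2} + z_{n-1} + a_0}{z_{n-2}},$$ that is, $$z_n = \frac{2i\, z_{n-2} + 2 z_{n-1} + (1-i)}{2 z_{n-2}} \quad\text{or}\quad z_n = \frac{-2i\, z_{n-2} + 2 z_{n-1} + (1+i)}{2 z_{n-2}},$$ is periodic with period $8$: for the sequence defined from indeterminates $z_1,z_2$ one has $z_9 = z_1$ and $z_{10} = z_2$ in $\mathbb{C}(z_1,z_2)$, hence $z_{n+8}=z_n$ for all $n\ge 1$.
   Context: Let $z_1,z_2$ be independent indeterminates over $\mathbb{C}$, and define $z_n \in \mathbb{C}(z_1,z_2)$ for $n\ge 3$ by the given recursion. A second-order recursion is said to be periodic with period $k$ if all iterates $z_3,z_4,\dots$ are well-defined elements of $\mathbb{C}(z_1,z_2)$ (no denominator is identically zero) and $z_{k+1}=z_1$, $z_{k+2}=z_2$; equivalently, every complex sequence satisfying the recursion for which no denominator vanishes satisfies $z_{n+k}=z_n$ for all $n$. *)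

theory Defs
  imports Complex_Main
begin

definition rec_seq :: "complex \<Rightarrow> complex \<Rightarrow> (nat \<Rightarrow> complex) \<Rightarrow> bool" where
  "rec_seq a2 a0 z \<longleftrightarrow>
     (\<forall>n\<ge>1. z n \<noteq> 0 \<and> z (n + 2) = (a2 * z n + z (n + 1) + a0) / z n)"

end

theory Submission
  imports Defs
begin

definition p2 :: "complex \<Rightarrow> complex \<Rightarrow> complex \<Rightarrow> complex" where
  "p2 s x y = (1)*s*x + (-(1/2))*s + (1)*y + (1/2)"

definition p3 :: "complex \<Rightarrow> complex \<Rightarrow> complex \<Rightarrow> complex" where
  "p3 s x y = (1)*s*x*y + (1/2)*s*x + (-(1/2))*s + (1/2)*x + (1)*y + (1/2)"

definition p4 :: "complex \<Rightarrow> complex \<Rightarrow> complex \<Rightarrow> complex" where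
  "p4 s x y = (1/2)*s*x*y + (-(1/2))*s*x + (-(3/2))*s*y + (-(1/2))*s + (1/2)*x*y + (1/2)*x + (1)*y*y + (1/2)*y + (-(1/2))"

definition p5 :: "complex \<Rightarrow> complex \<Rightarrow> complex \<Rightarrow> complex" where
  "p5 s x y = (-(1/2))*s*x*y*y + (-1)*s*x*y + (-(1/2))*s*x + (-1)*s*y*y + (-1)*s*y + (1/2)*x*y*y + (1/2)*x*y + (-1)*y + (-(1/2))"

definition p6 :: "complex \<Rightarrow> complex \<Rightarrow> complex \<Rightarrow> complex" where
  "p6 s x y = (-(1/2))*s*x*x + (-(3/2))*s*x*y*y + (-(7/2))*s*x*y + (-1)*s*x + (-1)*s*y*y*y + (-2)*s*y*y + (1/2)*s + (1)*x*x*y + (1/2)*x*x + (3/2)*x*y*y + (-1)*x + (-2)*y*y + (-(5/2))*y + (-(1/2))"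

definition p7 :: "complex \<Rightarrow> complex \<Rightarrow> complex \<Rightarrow> complex" where
  "p7 s x y = (-1)*s*x*y + (-(3/2))*s*x + (-1)*s*y + (-(1/2))*s + (1)*x*x + (1)*x*y + (1/2)*x + (-(1/2))"

lemma core0:
  fixes s x y :: complex
  assumes ss: "s*s = -1"
  shows "s*x + y + ((1-s)*(1/2)) = (p2 s x y)"
proof -
  have "s*x + y + ((1-s)*(1/2)) = (p2 s x y) + (s*s+1)*(0)"
    unfolding p2_def p3_def p4_def p5_def p6_def p7_def by algebra
  then show ?thesis using ss by simp
qed

lemma core1:
  fixes s x y :: complex
  assumes ss: "s*s = -1"
  shows "s*y*x + (p2 s x y) + ((1-s)*(1/2))*x = (p3 s x y)"
proof -
  have "s*y*x + (p2 s x y) + ((1-s)*(1/2))*x = (p3 s x y) + (s*s+1)*(0)"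
    unfolding p2_def p3_def p4_def p5_def p6_def p7_def by algebra
  then show ?thesis using ss by simp
qed

lemma core2:
  fixes s x y :: complex
  assumes ss: "s*s = -1"
  shows "s*(p2 s x y)*y + (p3 s x y) + ((1-s)*(1/2))*x*y = s*(p4 s x y)"
proof -
  have "s*(p2 s x y)*y + (p3 s x y) + ((1-s)*(1/2))*x*y = s*(p4 s x y) + (s*s+1)*((1/2)*x*y + (1/2)*x + (1)*y + (1/2))"
    unfolding p2_def p3_def p4_def p5_def p6_def p7_def by algebra
  then show ?thesis using ss by simp
qed

lemma core3:
  fixes s x y :: complex
  assumes ss: "s*s = -1"
  shows "-s*s*(p3 s x y)*(p2 s x y) + (p4 s x y)*x - ((1-s)*(1/2))*s*x*y*(p2 s x y) = s*(p5 s x y)"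
proof -
  have "-s*s*(p3 s x y)*(p2 s x y) + (p4 s x y)*x - ((1-s)*(1/2))*s*x*y*(p2 s x y) = s*(p5 s x y) + (s*s+1)*((-1)*s*s*x*x*y + (-(1/2))*s*s*x*x + (1/2)*s*s*x*y + (3/4)*s*s*x + (-(1/4))*s*s + (1/2)*s*x*x*y + (-(1/2))*s*x*x + (-1)*s*x*y*y + (-(9/4))*s*x*y + (-(1/2))*s*x + (1)*s*y + (1/2)*s + (1/2)*x*x*y + (1/2)*x*x + (1)*x*y*y + (1/2)*x*y + (-(1/2))*x)"
    unfolding p2_def p3_def p4_def p5_def p6_def p7_def by algebra
  then show ?thesis using ss by simp
qed

lemma core4:
  fixes s x y :: complex
  assumes ss: "s*s = -1"
  shows "-s*(p4 s x y)*(p3 s x y) - s*y*(p5 s x y) + ((1-s)*(1/2))*s*y*(p2 s x y)*(p3 s x y) = (1-s)*(1/2)*(p6 s x y)"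
proof -
  have "-s*(p4 s x y)*(p3 s x y) - s*y*(p5 s x y) + ((1-s)*(1/2))*s*y*(p2 s x y)*(p3 s x y) = (1-s)*(1/2)*(p6 s x y) + (s*s+1)*((-(1/2))*s*s*x*x*y*y + (-(1/4))*s*s*x*x*y + (1/4)*s*s*x*y*y + (3/8)*s*s*x*y + (-(1/8))*s*s*y + (1/4)*s*x*x*y + (1/4)*s*x*x + (-(1/2))*s*x*y*y*y + (1/4)*s*x*y*y + (7/8)*s*x*y + (1/2)*s*y*y + (-(3/8))*s*y + (-(1/4))*s + (-(1/2))*x*x*y + (-(1/4))*x*x + (-(3/4))*x*y*y + (1/2)*x + (1)*y*y + (5/4)*y + (1/4))"
    unfolding p2_def p3_def p4_def p5_def p6_def p7_def by algebra
  then show ?thesis using ss by simp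
qed

lemma core5:
  fixes s x y :: complex
  assumes ss: "s*s = -1"
  shows "s*(p5 s x y)*(-1-s)*(p4 s x y) + (p6 s x y)*(-(p2 s x y)) + ((1-s)*(1/2))*(-(p2 s x y))*(-1-s)*(p3 s x y)*(p4 s x y) = -s*(p5 s x y)*(p7 s x y)"
proof -
  have "s*(p5 s x y)*(-1-s)*(p4 s x y) + (p6 s x y)*(-(p2 s x y)) + ((1-s)*(1/2))*(-(p2 s x y))*(-1-s)*(p3 s x y)*(p4 s x y) = -s*(p5 s x y)*(p7 s x y) + (s*s+1)*((-(1/4))*s*s*s*x*x*x*y*y + (1/8)*s*s*s*x*x*x*y + (1/8)*s*s*s*x*x*x + (7/8)*s*s*s*x*x*y*y + (11/16)*s*s*s*x*x*y + (-(1/16))*s*s*s*x*x + (-(3/8))*s*s*s*x*y*y + (-(3/4))*s*s*s*x*y + (-(1/8))*s*s*s*x + (3/16)*s*s*s*y + (1/16)*s*s*s + (-(1/4))*s*s*x*x*x*y*y + (-(1/2))*s*s*x*x*x*y + (-(1/2))*s*s*x*x*y*y*y + (-(3/8))*s*s*x*x*y*y + (15/16)*s*s*x*x*y + (5/16)*s*s*x*x + (3/4)*s*s*x*y*y*y + (3/4)*s*s*x*y*y + (-1)*s*s*x*y + (-(1/2))*s*s*x + (-(3/2))*s*s*y*y*y + (-(23/8))*s*s*y*y + (-(19/16))*s*s*y + (-(1/16))*s*s + (1/2)*s*x*x*x*y*y + (-(3/8))*s*x*x*x*y + (-(3/8))*s*x*x*x + (1/2)*s*x*x*y*y*y + (-(1/8))*s*x*x*y*y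 + (11/16)*s*x*x*y + (15/16)*s*x*x + (9/4)*s*x*y*y*y + (49/8)*s*x*y*y + (15/4)*s*x*y + (1/8)*s*x + (1)*s*y*y*y*y + (9/4)*s*y*y*y + (-(1/2))*s*y*y + (-(29/16))*s*y + (-(7/16))*s + (-(7/8))*x*x*y*y + (-(13/16))*x*x*y + (-(3/16))*x*x + (-1)*x*y*y*y + (5/4)*x*y + (1/2)*x + (1/2)*y*y*y*y + (11/4)*y*y*y + (29/8)*y*y + (25/16)*y + (3/16))"
    unfolding p2_def p3_def p4_def p5_def p6_def p7_def by algebra
  then show ?thesis using ss by simp
qed

lemma core6:
  fixes s x y :: complex
  assumes ss: "s*s = -1"
  shows "s*(p6 s x y)*(1-s) + (p7 s x y)*(-1-s)*(p3 s x y) + ((1-s)*(1/2))*(-1-s)*(1-s)*(p3 s x y)*(p4 s x y) = (1-s)*(p6 s x y)*x"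
proof -
  have "s*(p6 s x y)*(1-s) + (p7 s x y)*(-1-s)*(p3 s x y) + ((1-s)*(1/2))*(-1-s)*(1-s)*(p3 s x y)*(p4 s x y) = (1-s)*(p6 s x y)*x + (s*s+1)*((-(1/4))*s*s*s*x*x*y*y + (1/8)*s*s*s*x*x*y + (1/8)*s*s*s*x*x + (3/4)*s*s*s*x*y*y + (3/4)*s*s*s*x*y + (-(3/8))*s*s*s*y + (-(1/8))*s*s*s + (-(5/8))*s*s*x*x*y + (-(1/8))*s*s*x*x + (-(1/2))*s*s*x*y*y*y + (-(3/2))*s*s*x*y*y + (1/2)*s*s*x + (1)*s*s*y*y + (9/8)*s*s*y + (1/8)*s*s + (7/4)*s*x*x*y*y + (17/8)*s*x*x*y + (7/8)*s*x*x + (1/2)*s*x*y*y*y + (5/4)*s*x*y*y + (5/4)*s*x*y + (1/2)*s*y*y*y + (1/2)*s*y*y + (-(3/8))*s*y + (-(3/8))*s + (-1)*x*x*x*y + (-1)*x*x*x + (-(3/2))*x*x*y*y + (-(13/8))*x*x*y + (1/8)*x*x + (1/2)*x*y*y + (1)*x*y + (1/2)*x + (-(1/2))*y*y*y + (-(1/2))*y*y + (5/8)*y + (3/8))"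
    unfolding p2_def p3_def p4_def p5_def p6_def p7_def by algebra
  then show ?thesis using ss by simp
qed

lemma core7:
  fixes s x y :: complex
  assumes ss: "s*s = -1"
  shows "s*(p7 s x y) + x*(1-s)*(p4 s x y) + ((1-s)*(1/2))*(1-s)*(p4 s x y) = (p7 s x y)*y"
proof -
  have "s*(p7 s x y) + x*(1-s)*(p4 s x y) + ((1-s)*(1/2))*(1-s)*(p4 s x y) = (p7 s x y)*y + (s*s+1)*((1/4)*s*x*y + (-(1/4))*s*x + (-(3/4))*s*y + (-(1/4))*s + (-(1/2))*x*x*y + (1/2)*x*x + (1/4)*x*y + (-(1/4))*x + (1/2)*y*y + (3/4)*y + (-(1/4)))"
    unfolding p2_def p3_def p4_def p5_def p6_def p7_def by algebra
  then show ?thesis using ss by simp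
qed
lemma step:
  fixes wk wk1 wk2 Dk Dk1 Dk2 Nk Nk1 Nk2 G a0 s :: complex
  assumes c0: "wk*Dk = Nk" and c1: "wk1*Dk1 = Nk1" and r: "wk2*wk = s*wk + wk1 + a0"
    and A: "Nk*Dk1 = G*Dk2" and B: "s*Nk*Dk1 + Nk1*Dk + a0*Dk*Dk1 = G*Nk2" and G0: "G \<noteq> 0"
  shows "wk2*Dk2 = Nk2"
proof -
  have "G*(wk2*Dk2) = wk2*(Nk*Dk1)" using A by simp
  also have "\<dots> = (wk2*wk)*Dk*Dk1" using c0 by (simp add: mult_ac)
  also have "\<dots> = (s*wk + wk1 + a0)*Dk*Dk1" using r by simp
  also have "\<dots> = s*(wk*Dk)*Dk1 + (wk1*Dk1)*Dk + a0*Dk*Dk1" by (simp add: algebra_simps)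
  also have "\<dots> = G*Nk2" using c0 c1 B by simp
  finally show ?thesis using G0 by simp
qed

lemma chain8:
  fixes s :: complex and w :: "nat \<Rightarrow> complex"
  assumes ss: "s*s = -1"
    and nz: "\<And>k. k < 8 \<Longrightarrow> w k \<noteq> 0"
    and rr: "\<And>k. k < 8 \<Longrightarrow> w (k+2) * w k = s * w k + w (k+1) + (1-s)*(1/2)"
  shows "w 8 = w 0 \<and> w 9 = w 1"
proof -
  define x where "x = w 0"
  define y where "y = w 1"

  define q2 where "q2 = p2 s x y"
  define q3 where "q3 = p3 s x y"
  define q4 where "q4 = p4 s x y"
  define q5 where "q5 = p5 s x y"
  define q6 where "q6 = p6 s x y"
  define q7 where "q7 = p7 s x y"
  have s0: "s \<noteq> 0" "-s \<noteq> 0" "-1-s \<noteq> 0" "1-s \<noteq> 0" "(1-s)*(1/2) \<noteq> 0" using ss by (auto simp: algebra_simps)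
  have sss: "\<And>z. s*(s*z) = -z" "s*s = -1" using ss by (simp_all add: mult.assoc[symmetric])
  have x0: "x \<noteq> 0" using nz[of 0] x_def by simp
  have y0: "y \<noteq> 0" using nz[of 1] y_def by simp
  have c0: "w 0 * 1 = x" using x_def by simp
  have c1: "w 1 * 1 = y" using y_def by simp
  have k0: "s*x + y + ((1-s)*(1/2)) = q2" using core0[where x=x and y=y, OF ss] unfolding q2_def q3_def q4_def q5_def q6_def q7_def by simp
  have A0: "x*1 = 1*x" using ss by ((simp add: algebra_simps sss; fail) | algebra)
  have B0: "s*x*1 + y*1 + ((1-s)*(1/2))*1*1 = 1*q2"
  proof -
    have e1: "s*x*1 + y*1 + ((1-s)*(1/2))*1*1 = 1*(s*x + y + ((1-s)*(1/2)))" by ((simp add: algebra_simps; fail) | algebra)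
    have e2: "1*(s*x + y + ((1-s)*(1/2))) = 1*(q2)" by (simp only: k0)
    have e3: "1*(q2) = 1*q2" by ((simp add: algebra_simps; fail) | algebra)
    show ?thesis by (rule trans[OF e1 trans[OF e2 e3]])
  qed
  have G0: "(1::complex) \<noteq> 0" by simp
  have r0: "w 2 * w 0 = s * w 0 + w 1 + ((1-s)*(1/2))" using rr[of 0] by (simp add: eval_nat_numeral)
  have c2: "w 2 * x = q2" by (rule step[OF c0 c1 r0 A0 B0 G0])
  have m2: "q2 \<noteq> 0" using c2 nz[of 2] s0 x0 y0  by auto
  have k1: "s*y*x + q2 + ((1-s)*(1/2))*x = q3" using core1[where x=x and y=y, OF ss] unfolding q2_def q3_def q4_def q5_def q6_def q7_def by simp
  have A1: "y*x = 1*(x*y)" using ss by ((simp add: algebra_simps sss; fail) | algebra)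
  have B1: "s*y*x + q2*1 + ((1-s)*(1/2))*1*x = 1*q3"
  proof -
    have e1: "s*y*x + q2*1 + ((1-s)*(1/2))*1*x = 1*(s*y*x + q2 + ((1-s)*(1/2))*x)" by ((simp add: algebra_simps; fail) | algebra)
    have e2: "1*(s*y*x + q2 + ((1-s)*(1/2))*x) = 1*(q3)" by (simp only: k1)
    have e3: "1*(q3) = 1*q3" by ((simp add: algebra_simps; fail) | algebra)
    show ?thesis by (rule trans[OF e1 trans[OF e2 e3]])
  qed
  have G1: "(1::complex) \<noteq> 0" by simp
  have r1: "w 3 * w 1 = s * w 1 + w 2 + ((1-s)*(1/2))" using rr[of 1] by (simp add: eval_nat_numeral)
  have c3: "w 3 * (x*y) = q3" by (rule step[OF c1 c2 r1 A1 B1 G1])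
  have m3: "q3 \<noteq> 0" using c3 nz[of 3] s0 x0 y0 m2 by auto
  have k2: "s*q2*y + q3 + ((1-s)*(1/2))*x*y = s*q4" using core2[where x=x and y=y, OF ss] unfolding q2_def q3_def q4_def q5_def q6_def q7_def by simp
  have A2: "q2*(x*y) = (s*x)*(-s*y*q2)" using ss by ((simp add: algebra_simps sss; fail) | algebra)
  have B2: "s*q2*(x*y) + q3*x + ((1-s)*(1/2))*x*(x*y) = (s*x)*q4"
  proof -
    have e1: "s*q2*(x*y) + q3*x + ((1-s)*(1/2))*x*(x*y) = x*(s*q2*y + q3 + ((1-s)*(1/2))*x*y)" by ((simp add: algebra_simps; fail) | algebra)
    have e2: "x*(s*q2*y + q3 + ((1-s)*(1/2))*x*y) = x*(s*q4)" by (simp only: k2)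
    have e3: "x*(s*q4) = (s*x)*q4" by ((simp add: algebra_simps; fail) | algebra)
    show ?thesis by (rule trans[OF e1 trans[OF e2 e3]])
  qed
  have G2: "(s*x) \<noteq> 0" using s0 x0 y0 m2 m3 by auto
  have r2: "w 4 * w 2 = s * w 2 + w 3 + ((1-s)*(1/2))" using rr[of 2] by (simp add: eval_nat_numeral)
  have c4: "w 4 * (-s*y*q2) = q4" by (rule step[OF c2 c3 r2 A2 B2 G2])
  have m4: "q4 \<noteq> 0" using c4 nz[of 4] s0 x0 y0 m2 m3 by auto
  have k3: "-s*s*q3*q2 + q4*x - ((1-s)*(1/2))*s*x*y*q2 = s*q5" using core3[where x=x and y=y, OF ss] unfolding q2_def q3_def q4_def q5_def q6_def q7_def by simp
  have A3: "q3*(-s*y*q2) = (s*y)*(-(q2*q3))" using ss by ((simp add: algebra_simps sss; fail) | algebra)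
  have B3: "s*q3*(-s*y*q2) + q4*(x*y) + ((1-s)*(1/2))*(x*y)*(-s*y*q2) = (s*y)*q5"
  proof -
    have e1: "s*q3*(-s*y*q2) + q4*(x*y) + ((1-s)*(1/2))*(x*y)*(-s*y*q2) = y*(-s*s*q3*q2 + q4*x - ((1-s)*(1/2))*s*x*y*q2)" by ((simp add: algebra_simps; fail) | algebra)
    have e2: "y*(-s*s*q3*q2 + q4*x - ((1-s)*(1/2))*s*x*y*q2) = y*(s*q5)" by (simp only: k3)
    have e3: "y*(s*q5) = (s*y)*q5" by ((simp add: algebra_simps; fail) | algebra)
    show ?thesis by (rule trans[OF e1 trans[OF e2 e3]])
  qed
  have G3: "(s*y) \<noteq> 0" using s0 x0 y0 m2 m3 m4 by auto
  have r3: "w 5 * w 3 = s * w 3 + w 4 + ((1-s)*(1/2))" using rr[of 3] by (simp add: eval_nat_numeral)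
  have c5: "w 5 * (-(q2*q3)) = q5" by (rule step[OF c3 c4 r3 A3 B3 G3])
  have m5: "q5 \<noteq> 0" using c5 nz[of 5] s0 x0 y0 m2 m3 m4 by auto
  have k4: "-s*q4*q3 - s*y*q5 + ((1-s)*(1/2))*s*y*q2*q3 = (1-s)*(1/2)*q6" using core4[where x=x and y=y, OF ss] unfolding q2_def q3_def q4_def q5_def q6_def q7_def by simp
  have A4: "q4*(-(q2*q3)) = (q2*((1-s)*(1/2)))*((-1-s)*q3*q4)" using ss by ((simp add: algebra_simps sss; fail) | algebra)
  have B4: "s*q4*(-(q2*q3)) + q5*(-s*y*q2) + ((1-s)*(1/2))*(-s*y*q2)*(-(q2*q3)) = (q2*((1-s)*(1/2)))*q6"
  proof -
    have e1: "s*q4*(-(q2*q3)) + q5*(-s*y*q2) + ((1-s)*(1/2))*(-s*y*q2)*(-(q2*q3)) = q2*(-s*q4*q3 - s*y*q5 + ((1-s)*(1/2))*s*y*q2*q3)" by ((simp add: algebra_simps; fail) | algebra)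
    have e2: "q2*(-s*q4*q3 - s*y*q5 + ((1-s)*(1/2))*s*y*q2*q3) = q2*((1-s)*(1/2)*q6)" by (simp only: k4)
    have e3: "q2*((1-s)*(1/2)*q6) = (q2*((1-s)*(1/2)))*q6" by ((simp add: algebra_simps; fail) | algebra)
    show ?thesis by (rule trans[OF e1 trans[OF e2 e3]])
  qed
  have G4: "(q2*((1-s)*(1/2))) \<noteq> 0" using s0 x0 y0 m2 m3 m4 m5 by auto
  have r4: "w 6 * w 4 = s * w 4 + w 5 + ((1-s)*(1/2))" using rr[of 4] by (simp add: eval_nat_numeral)
  have c6: "w 6 * ((-1-s)*q3*q4) = q6" by (rule step[OF c4 c5 r4 A4 B4 G4])
  have m6: "q6 \<noteq> 0" using c6 nz[of 6] s0 x0 y0 m2 m3 m4 m5 by auto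
  have k5: "s*q5*(-1-s)*q4 + q6*(-q2) + ((1-s)*(1/2))*(-q2)*(-1-s)*q3*q4 = -s*q5*q7" using core5[where x=x and y=y, OF ss] unfolding q2_def q3_def q4_def q5_def q6_def q7_def by simp
  have A5: "q5*((-1-s)*q3*q4) = (-s*q5*q3)*((1-s)*q4)" using ss by ((simp add: algebra_simps sss; fail) | algebra)
  have B5: "s*q5*((-1-s)*q3*q4) + q6*(-(q2*q3)) + ((1-s)*(1/2))*(-(q2*q3))*((-1-s)*q3*q4) = (-s*q5*q3)*q7"
  proof -
    have e1: "s*q5*((-1-s)*q3*q4) + q6*(-(q2*q3)) + ((1-s)*(1/2))*(-(q2*q3))*((-1-s)*q3*q4) = q3*(s*q5*(-1-s)*q4 + q6*(-q2) + ((1-s)*(1/2))*(-q2)*(-1-s)*q3*q4)" by ((simp add: algebra_simps; fail) | algebra)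
    have e2: "q3*(s*q5*(-1-s)*q4 + q6*(-q2) + ((1-s)*(1/2))*(-q2)*(-1-s)*q3*q4) = q3*(-s*q5*q7)" by (simp only: k5)
    have e3: "q3*(-s*q5*q7) = (-s*q5*q3)*q7" by ((simp add: algebra_simps; fail) | algebra)
    show ?thesis by (rule trans[OF e1 trans[OF e2 e3]])
  qed
  have G5: "(-s*q5*q3) \<noteq> 0" using s0 x0 y0 m2 m3 m4 m5 m6 by auto
  have r5: "w 7 * w 5 = s * w 5 + w 6 + ((1-s)*(1/2))" using rr[of 5] by (simp add: eval_nat_numeral)
  have c7: "w 7 * ((1-s)*q4) = q7" by (rule step[OF c5 c6 r5 A5 B5 G5])
  have m7: "q7 \<noteq> 0" using c7 nz[of 7] s0 x0 y0 m2 m3 m4 m5 m6 by auto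
  have k6: "s*q6*(1-s) + q7*(-1-s)*q3 + ((1-s)*(1/2))*(-1-s)*(1-s)*q3*q4 = (1-s)*q6*x" using core6[where x=x and y=y, OF ss] unfolding q2_def q3_def q4_def q5_def q6_def q7_def by simp
  have A6: "q6*((1-s)*q4) = ((1-s)*q4*q6)*1" using ss by ((simp add: algebra_simps sss; fail) | algebra)
  have B6: "s*q6*((1-s)*q4) + q7*((-1-s)*q3*q4) + ((1-s)*(1/2))*((-1-s)*q3*q4)*((1-s)*q4) = ((1-s)*q4*q6)*x"
  proof -
    have e1: "s*q6*((1-s)*q4) + q7*((-1-s)*q3*q4) + ((1-s)*(1/2))*((-1-s)*q3*q4)*((1-s)*q4) = q4*(s*q6*(1-s) + q7*(-1-s)*q3 + ((1-s)*(1/2))*(-1-s)*(1-s)*q3*q4)" by ((simp add: algebra_simps; fail) | algebra)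
    have e2: "q4*(s*q6*(1-s) + q7*(-1-s)*q3 + ((1-s)*(1/2))*(-1-s)*(1-s)*q3*q4) = q4*((1-s)*q6*x)" by (simp only: k6)
    have e3: "q4*((1-s)*q6*x) = ((1-s)*q4*q6)*x" by ((simp add: algebra_simps; fail) | algebra)
    show ?thesis by (rule trans[OF e1 trans[OF e2 e3]])
  qed
  have G6: "((1-s)*q4*q6) \<noteq> 0" using s0 x0 y0 m2 m3 m4 m5 m6 m7 by auto
  have r6: "w 8 * w 6 = s * w 6 + w 7 + ((1-s)*(1/2))" using rr[of 6] by (simp add: eval_nat_numeral)
  have c8: "w 8 * 1 = x" by (rule step[OF c6 c7 r6 A6 B6 G6])
  have k7: "s*q7 + x*(1-s)*q4 + ((1-s)*(1/2))*(1-s)*q4 = q7*y" using core7[where x=x and y=y, OF ss] unfolding q2_def q3_def q4_def q5_def q6_def q7_def by simp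
  have A7: "q7*1 = q7*1" using ss by ((simp add: algebra_simps sss; fail) | algebra)
  have B7: "s*q7*1 + x*((1-s)*q4) + ((1-s)*(1/2))*((1-s)*q4)*1 = q7*y"
  proof -
    have e1: "s*q7*1 + x*((1-s)*q4) + ((1-s)*(1/2))*((1-s)*q4)*1 = 1*(s*q7 + x*(1-s)*q4 + ((1-s)*(1/2))*(1-s)*q4)" by ((simp add: algebra_simps; fail) | algebra)
    have e2: "1*(s*q7 + x*(1-s)*q4 + ((1-s)*(1/2))*(1-s)*q4) = 1*(q7*y)" by (simp only: k7)
    have e3: "1*(q7*y) = q7*y" by ((simp add: algebra_simps; fail) | algebra)
    show ?thesis by (rule trans[OF e1 trans[OF e2 e3]])
  qed
  have G7: "q7 \<noteq> 0" using s0 x0 y0 m2 m3 m4 m5 m6 m7 by auto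
  have r7: "w 9 * w 7 = s * w 7 + w 8 + ((1-s)*(1/2))" using rr[of 7] by (simp add: eval_nat_numeral)
  have c9: "w 9 * 1 = y" by (rule step[OF c7 c8 r7 A7 B7 G7])
  show ?thesis using c8 c9 x_def y_def by simp
qed
fun vv :: "complex \<Rightarrow> nat \<Rightarrow> complex" where
  "vv s (0) = (1) + (0)*s"
|   "vv s (Suc 0) = (1) + (0)*s"
|   "vv s (Suc (Suc 0)) = (3/2) + (1/2)*s"
|   "vv s (Suc (Suc (Suc 0))) = (2) + (1)*s"
|   "vv s (Suc (Suc (Suc (Suc 0)))) = (8/5) + (4/5)*s"
|   "vv s (Suc (Suc (Suc (Suc (Suc 0))))) = (9/10) + (7/10)*s"
|   "vv s (Suc (Suc (Suc (Suc (Suc (Suc 0)))))) = (3/4) + (3/4)*s"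
|   "vv s _ = (1) + (1/2)*s"

lemma vv_ok:
  fixes s :: complex
  assumes ss: "s*s = -1" and r: "r < 8"
  shows "vv s r \<noteq> 0 \<and> vv s ((r+2) mod 8) * vv s r = s * vv s r + vv s ((r+1) mod 8) + (1-s)*(1/2)"
proof -
  have v0: "vv s 0 = (1) + (0)*s" by (simp add: eval_nat_numeral)
  have n0: "((1) + (0)*s)*((1) + (0)*s) = (1) + (s*s+1)*((0))" by algebra
  have v1: "vv s 1 = (1) + (0)*s" by (simp add: eval_nat_numeral)
  have n1: "((1) + (0)*s)*((1) + (0)*s) = (1) + (s*s+1)*((0))" by algebra
  have v2: "vv s 2 = (3/2) + (1/2)*s" by (simp add: eval_nat_numeral)
  have n2: "((3/2) + (1/2)*s)*((3/2) + (-(1/2))*s) = (5/2) + (s*s+1)*((-(1/4)))" by algebra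
  have v3: "vv s 3 = (2) + (1)*s" by (simp add: eval_nat_numeral)
  have n3: "((2) + (1)*s)*((2) + (-1)*s) = (5) + (s*s+1)*((-1))" by algebra
  have v4: "vv s 4 = (8/5) + (4/5)*s" by (simp add: eval_nat_numeral)
  have n4: "((8/5) + (4/5)*s)*((8/5) + (-(4/5))*s) = (16/5) + (s*s+1)*((-(16/25)))" by algebra
  have v5: "vv s 5 = (9/10) + (7/10)*s" by (simp add: eval_nat_numeral)
  have n5: "((9/10) + (7/10)*s)*((9/10) + (-(7/10))*s) = (13/10) + (s*s+1)*((-(49/100)))" by algebra
  have v6: "vv s 6 = (3/4) + (3/4)*s" by (simp add: eval_nat_numeral)
  have n6: "((3/4) + (3/4)*s)*((3/4) + (-(3/4))*s) = (9/8) + (s*s+1)*((-(9/16)))" by algebra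
  have v7: "vv s 7 = (1) + (1/2)*s" by (simp add: eval_nat_numeral)
  have n7: "((1) + (1/2)*s)*((1) + (-(1/2))*s) = (5/4) + (s*s+1)*((-(1/4)))" by algebra
  have ss1: "s*s+1 = 0" using ss by simp
  have q0: "((3/2) + (1/2)*s)*((1) + (0)*s) = s*((1) + (0)*s) + ((1) + (0)*s) + (1-s)*(1/2) + (s*s+1)*((0))" by algebra
  have R0: "vv s 0 \<noteq> 0 \<and> vv s 2 * vv s 0 = s * vv s 0 + vv s 1 + (1-s)*(1/2)"
  proof
    have e: "((1) + (0)*s)*((1) + (0)*s) = (1)" using n0 by (simp only: ss1 mult_zero_left add_0_right)
    have "vv s 0 * ((1) + (0)*s) = (1)" by (simp only: v0 e)
    then show "vv s 0 \<noteq> 0" by (metis mult_zero_left zero_neq_numeral divide_eq_0_iff one_neq_zero)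
    have f: "((3/2) + (1/2)*s)*((1) + (0)*s) = s*((1) + (0)*s) + ((1) + (0)*s) + (1-s)*(1/2)" using q0 by (simp only: ss1 mult_zero_left add_0_right)
    show "vv s 2 * vv s 0 = s * vv s 0 + vv s 1 + (1-s)*(1/2)" by (simp only: v0 v1 v2 f)
  qed
  have q1: "((2) + (1)*s)*((1) + (0)*s) = s*((1) + (0)*s) + ((3/2) + (1/2)*s) + (1-s)*(1/2) + (s*s+1)*((0))" by algebra
  have R1: "vv s 1 \<noteq> 0 \<and> vv s 3 * vv s 1 = s * vv s 1 + vv s 2 + (1-s)*(1/2)"
  proof
    have e: "((1) + (0)*s)*((1) + (0)*s) = (1)" using n1 by (simp only: ss1 mult_zero_left add_0_right)
    have "vv s 1 * ((1) + (0)*s) = (1)" by (simp only: v1 e)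
    then show "vv s 1 \<noteq> 0" by (metis mult_zero_left zero_neq_numeral divide_eq_0_iff one_neq_zero)
    have f: "((2) + (1)*s)*((1) + (0)*s) = s*((1) + (0)*s) + ((3/2) + (1/2)*s) + (1-s)*(1/2)" using q1 by (simp only: ss1 mult_zero_left add_0_right)
    show "vv s 3 * vv s 1 = s * vv s 1 + vv s 2 + (1-s)*(1/2)" by (simp only: v1 v2 v3 f)
  qed
  have q2: "((8/5) + (4/5)*s)*((3/2) + (1/2)*s) = s*((3/2) + (1/2)*s) + ((2) + (1)*s) + (1-s)*(1/2) + (s*s+1)*((-(1/10)))" by algebra
  have R2: "vv s 2 \<noteq> 0 \<and> vv s 4 * vv s 2 = s * vv s 2 + vv s 3 + (1-s)*(1/2)"
  proof
    have e: "((3/2) + (1/2)*s)*((3/2) + (-(1/2))*s) = (5/2)" using n2 by (simp only: ss1 mult_zero_left add_0_right)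
    have "vv s 2 * ((3/2) + (-(1/2))*s) = (5/2)" by (simp only: v2 e)
    then show "vv s 2 \<noteq> 0" by (metis mult_zero_left zero_neq_numeral divide_eq_0_iff one_neq_zero)
    have f: "((8/5) + (4/5)*s)*((3/2) + (1/2)*s) = s*((3/2) + (1/2)*s) + ((2) + (1)*s) + (1-s)*(1/2)" using q2 by (simp only: ss1 mult_zero_left add_0_right)
    show "vv s 4 * vv s 2 = s * vv s 2 + vv s 3 + (1-s)*(1/2)" by (simp only: v2 v3 v4 f)
  qed
  have q3: "((9/10) + (7/10)*s)*((2) + (1)*s) = s*((2) + (1)*s) + ((8/5) + (4/5)*s) + (1-s)*(1/2) + (s*s+1)*((-(3/10)))" by algebra
  have R3: "vv s 3 \<noteq> 0 \<and> vv s 5 * vv s 3 = s * vv s 3 + vv s 4 + (1-s)*(1/2)"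
  proof
    have e: "((2) + (1)*s)*((2) + (-1)*s) = (5)" using n3 by (simp only: ss1 mult_zero_left add_0_right)
    have "vv s 3 * ((2) + (-1)*s) = (5)" by (simp only: v3 e)
    then show "vv s 3 \<noteq> 0" by (metis mult_zero_left zero_neq_numeral divide_eq_0_iff one_neq_zero)
    have f: "((9/10) + (7/10)*s)*((2) + (1)*s) = s*((2) + (1)*s) + ((8/5) + (4/5)*s) + (1-s)*(1/2)" using q3 by (simp only: ss1 mult_zero_left add_0_right)
    show "vv s 5 * vv s 3 = s * vv s 3 + vv s 4 + (1-s)*(1/2)" by (simp only: v3 v4 v5 f)
  qed
  have q4: "((3/4) + (3/4)*s)*((8/5) + (4/5)*s) = s*((8/5) + (4/5)*s) + ((9/10) + (7/10)*s) + (1-s)*(1/2) + (s*s+1)*((-(1/5)))" by algebra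
  have R4: "vv s 4 \<noteq> 0 \<and> vv s 6 * vv s 4 = s * vv s 4 + vv s 5 + (1-s)*(1/2)"
  proof
    have e: "((8/5) + (4/5)*s)*((8/5) + (-(4/5))*s) = (16/5)" using n4 by (simp only: ss1 mult_zero_left add_0_right)
    have "vv s 4 * ((8/5) + (-(4/5))*s) = (16/5)" by (simp only: v4 e)
    then show "vv s 4 \<noteq> 0" by (metis mult_zero_left zero_neq_numeral divide_eq_0_iff one_neq_zero)
    have f: "((3/4) + (3/4)*s)*((8/5) + (4/5)*s) = s*((8/5) + (4/5)*s) + ((9/10) + (7/10)*s) + (1-s)*(1/2)" using q4 by (simp only: ss1 mult_zero_left add_0_right)
    show "vv s 6 * vv s 4 = s * vv s 4 + vv s 5 + (1-s)*(1/2)" by (simp only: v4 v5 v6 f)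
  qed
  have q5: "((1) + (1/2)*s)*((9/10) + (7/10)*s) = s*((9/10) + (7/10)*s) + ((3/4) + (3/4)*s) + (1-s)*(1/2) + (s*s+1)*((-(7/20)))" by algebra
  have R5: "vv s 5 \<noteq> 0 \<and> vv s 7 * vv s 5 = s * vv s 5 + vv s 6 + (1-s)*(1/2)"
  proof
    have e: "((9/10) + (7/10)*s)*((9/10) + (-(7/10))*s) = (13/10)" using n5 by (simp only: ss1 mult_zero_left add_0_right)
    have "vv s 5 * ((9/10) + (-(7/10))*s) = (13/10)" by (simp only: v5 e)
    then show "vv s 5 \<noteq> 0" by (metis mult_zero_left zero_neq_numeral divide_eq_0_iff one_neq_zero)
    have f: "((1) + (1/2)*s)*((9/10) + (7/10)*s) = s*((9/10) + (7/10)*s) + ((3/4) + (3/4)*s) + (1-s)*(1/2)" using q5 by (simp only: ss1 mult_zero_left add_0_right)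
    show "vv s 7 * vv s 5 = s * vv s 5 + vv s 6 + (1-s)*(1/2)" by (simp only: v5 v6 v7 f)
  qed
  have q6: "((1) + (0)*s)*((3/4) + (3/4)*s) = s*((3/4) + (3/4)*s) + ((1) + (1/2)*s) + (1-s)*(1/2) + (s*s+1)*((-(3/4)))" by algebra
  have R6: "vv s 6 \<noteq> 0 \<and> vv s 0 * vv s 6 = s * vv s 6 + vv s 7 + (1-s)*(1/2)"
  proof
    have e: "((3/4) + (3/4)*s)*((3/4) + (-(3/4))*s) = (9/8)" using n6 by (simp only: ss1 mult_zero_left add_0_right)
    have "vv s 6 * ((3/4) + (-(3/4))*s) = (9/8)" by (simp only: v6 e)
    then show "vv s 6 \<noteq> 0" by (metis mult_zero_left zero_neq_numeral divide_eq_0_iff one_neq_zero)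
    have f: "((1) + (0)*s)*((3/4) + (3/4)*s) = s*((3/4) + (3/4)*s) + ((1) + (1/2)*s) + (1-s)*(1/2)" using q6 by (simp only: ss1 mult_zero_left add_0_right)
    show "vv s 0 * vv s 6 = s * vv s 6 + vv s 7 + (1-s)*(1/2)" by (simp only: v6 v7 v0 f)
  qed
  have q7: "((1) + (0)*s)*((1) + (1/2)*s) = s*((1) + (1/2)*s) + ((1) + (0)*s) + (1-s)*(1/2) + (s*s+1)*((-(1/2)))" by algebra
  have R7: "vv s 7 \<noteq> 0 \<and> vv s 1 * vv s 7 = s * vv s 7 + vv s 0 + (1-s)*(1/2)"
  proof
    have e: "((1) + (1/2)*s)*((1) + (-(1/2))*s) = (5/4)" using n7 by (simp only: ss1 mult_zero_left add_0_right)
    have "vv s 7 * ((1) + (-(1/2))*s) = (5/4)" by (simp only: v7 e)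
    then show "vv s 7 \<noteq> 0" by (metis mult_zero_left zero_neq_numeral divide_eq_0_iff one_neq_zero)
    have f: "((1) + (0)*s)*((1) + (1/2)*s) = s*((1) + (1/2)*s) + ((1) + (0)*s) + (1-s)*(1/2)" using q7 by (simp only: ss1 mult_zero_left add_0_right)
    show "vv s 1 * vv s 7 = s * vv s 7 + vv s 0 + (1-s)*(1/2)" by (simp only: v7 v0 v1 f)
  qed
  have S0: "vv s 0 \<noteq> 0 \<and> vv s ((0+2) mod 8) * vv s 0 = s * vv s 0 + vv s ((0+1) mod 8) + (1-s)*(1/2)"
  proof -
    have a: "((0::nat)+2) mod 8 = 2" "((0::nat)+1) mod 8 = 1" by simp_all
    show ?thesis unfolding a by (rule R0)
  qed
  have S1: "vv s 1 \<noteq> 0 \<and> vv s ((1+2) mod 8) * vv s 1 = s * vv s 1 + vv s ((1+1) mod 8) + (1-s)*(1/2)"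
  proof -
    have a: "((1::nat)+2) mod 8 = 3" "((1::nat)+1) mod 8 = 2" by simp_all
    show ?thesis unfolding a by (rule R1)
  qed
  have S2: "vv s 2 \<noteq> 0 \<and> vv s ((2+2) mod 8) * vv s 2 = s * vv s 2 + vv s ((2+1) mod 8) + (1-s)*(1/2)"
  proof -
    have a: "((2::nat)+2) mod 8 = 4" "((2::nat)+1) mod 8 = 3" by simp_all
    show ?thesis unfolding a by (rule R2)
  qed
  have S3: "vv s 3 \<noteq> 0 \<and> vv s ((3+2) mod 8) * vv s 3 = s * vv s 3 + vv s ((3+1) mod 8) + (1-s)*(1/2)"
  proof -
    have a: "((3::nat)+2) mod 8 = 5" "((3::nat)+1) mod 8 = 4" by simp_all
    show ?thesis unfolding a by (rule R3)
  qed
  have S4: "vv s 4 \<noteq> 0 \<and> vv s ((4+2) mod 8) * vv s 4 = s * vv s 4 + vv s ((4+1) mod 8) + (1-s)*(1/2)"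
  proof -
    have a: "((4::nat)+2) mod 8 = 6" "((4::nat)+1) mod 8 = 5" by simp_all
    show ?thesis unfolding a by (rule R4)
  qed
  have S5: "vv s 5 \<noteq> 0 \<and> vv s ((5+2) mod 8) * vv s 5 = s * vv s 5 + vv s ((5+1) mod 8) + (1-s)*(1/2)"
  proof -
    have a: "((5::nat)+2) mod 8 = 7" "((5::nat)+1) mod 8 = 6" by simp_all
    show ?thesis unfolding a by (rule R5)
  qed
  have S6: "vv s 6 \<noteq> 0 \<and> vv s ((6+2) mod 8) * vv s 6 = s * vv s 6 + vv s ((6+1) mod 8) + (1-s)*(1/2)"
  proof -
    have a: "((6::nat)+2) mod 8 = 0" "((6::nat)+1) mod 8 = 7" by simp_all
    show ?thesis unfolding a by (rule R6)
  qed
  have S7: "vv s 7 \<noteq> 0 \<and> vv s ((7+2) mod 8) * vv s 7 = s * vv s 7 + vv s ((7+1) mod 8) + (1-s)*(1/2)"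
  proof -
    have a: "((7::nat)+2) mod 8 = 1" "((7::nat)+1) mod 8 = 0" by simp_all
    show ?thesis unfolding a by (rule R7)
  qed
  have "r = 0 \<or> r = 1 \<or> r = 2 \<or> r = 3 \<or> r = 4 \<or> r = 5 \<or> r = 6 \<or> r = 7" using r by auto
  then show ?thesis
  proof (elim disjE)
    assume h: "r = 0"
    show ?thesis unfolding h by (rule S0)
  next
    assume h: "r = 1"
    show ?thesis unfolding h by (rule S1)
  next
    assume h: "r = 2"
    show ?thesis unfolding h by (rule S2)
  next
    assume h: "r = 3"
    show ?thesis unfolding h by (rule S3)
  next
    assume h: "r = 4"
    show ?thesis unfolding h by (rule S4)
  next
    assume h: "r = 5"
    show ?thesis unfolding h by (rule S5)
  next
    assume h: "r = 6"
    show ?thesis unfolding h by (rule S6)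
  next
    assume h: "r = 7"
    show ?thesis unfolding h by (rule S7)
  qed
qed
theorem mainTheorem1:
  fixes a2 a0 :: complex
  assumes "(a2 = \<i> \<and> a0 = (1 - \<i>) / 2) \<or> (a2 = - \<i> \<and> a0 = (1 + \<i>) / 2)"
  shows "(\<exists>z. rec_seq a2 a0 z) \<and>
         (\<forall>z. rec_seq a2 a0 z \<longrightarrow> (\<forall>n\<ge>1. z (n + 8) = z n))"
proof -
  have ss: "a2*a2 = -1" using assms by auto
  have a0e: "a0 = (1-a2)*(1/2)" using assms by auto
  have ex: "rec_seq a2 a0 (\<lambda>n. vv a2 ((n+7) mod 8))"
    unfolding rec_seq_def
  proof (intro allI impI)
    fix n :: nat assume "n \<ge> 1"
    define r where "r = (n+7) mod 8"
    have r8: "r < 8" unfolding r_def by simp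
    from vv_ok[OF ss r8] have h: "vv a2 r \<noteq> 0 \<and> vv a2 ((r+2) mod 8) * vv a2 r = a2 * vv a2 r + vv a2 ((r+1) mod 8) + (1-a2)*(1/2)" .
    have e1: "(n+1+7) mod 8 = (r+1) mod 8" unfolding r_def by (simp add: mod_simps)
    have e2: "(n+2+7) mod 8 = (r+2) mod 8" unfolding r_def by (simp add: mod_simps)
    have hn: "vv a2 r \<noteq> 0" using h by blast
    have hr: "vv a2 ((r+2) mod 8) * vv a2 r = a2 * vv a2 r + vv a2 ((r+1) mod 8) + a0" using h a0e by simp
    show "vv a2 ((n+7) mod 8) \<noteq> 0 \<and> vv a2 ((n+2+7) mod 8) = (a2 * vv a2 ((n+7) mod 8) + vv a2 ((n+1+7) mod 8) + a0) / vv a2 ((n+7) mod 8)"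
      unfolding e1 e2 r_def[symmetric] using hn hr by (simp add: eq_divide_eq)
  qed
  have per: "\<forall>z. rec_seq a2 a0 z \<longrightarrow> (\<forall>n\<ge>1. z (n + 8) = z n)"
  proof (intro allI impI)
    fix z :: "nat \<Rightarrow> complex" and n :: nat
    assume rz: "rec_seq a2 a0 z" and n1: "n \<ge> 1"
    have nz: "\<And>k. k < 8 \<Longrightarrow> (\<lambda>k. z (n+k)) k \<noteq> 0" using rz n1 unfolding rec_seq_def by simp
    have rr: "\<And>k. k < 8 \<Longrightarrow> (\<lambda>k. z (n+k)) (k+2) * (\<lambda>k. z (n+k)) k = a2 * (\<lambda>k. z (n+k)) k + (\<lambda>k. z (n+k)) (k+1) + (1-a2)*(1/2)"
    proof -
      fix k :: nat assume "k < 8"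
      have "n + k \<ge> 1" using n1 by simp
      then have q: "z (n+k) \<noteq> 0 \<and> z (n+k+2) = (a2 * z (n+k) + z (n+k+1) + a0) / z (n+k)" using rz unfolding rec_seq_def by blast
      then have "z (n+k+2) * z (n+k) = a2 * z (n+k) + z (n+k+1) + a0" by (simp add: eq_divide_eq)
      then show "(\<lambda>k. z (n+k)) (k+2) * (\<lambda>k. z (n+k)) k = a2 * (\<lambda>k. z (n+k)) k + (\<lambda>k. z (n+k)) (k+1) + (1-a2)*(1/2)"
        using a0e by (simp add: add.assoc)
    qed
    have "(\<lambda>k. z (n+k)) 8 = (\<lambda>k. z (n+k)) 0 \<and> (\<lambda>k. z (n+k)) 9 = (\<lambda>k. z (n+k)) 1"
      by (rule chain8[OF ss nz rr])
    then show "z (n + 8) = z n" by simp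
  qed
  show ?thesis using ex per by blast
qed

end
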